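(* Let $\mathcal{G}_{k-1}=(V,E_{k-1})$ be an unweighted simple directed graph, let $e_k=(u_k,v_k)$ with $u_k\neq v_k$ and $e_k\notin E_{k-1}$ be an edge to be inserted, and let $\mathcal{G}_k=(V,E_{k-1}\cup\{e_k\})$. Let $L_{k-1}$ be a list of $l_{k-1}$ spanning converging forests sampled uniformly from $\mathcal{F}(\mathcal{G}_{k-1})$. Let $L_k$ be the list obtained from $L_{k-1}$ by keeping all forests of $L_{k-1}$ and, in addition, for each $\phi\in L_{k-1}$ with $r_\phi(u_k)=u_k$ and $r_\phi(v_k)\neq u_k$, adding the forest $\phi\cup\{e_k\}$. Then all forests in $\mathcal{F}(\mathcal{G}_k)$ have the same probability of being included in $L_k$; that is, $\mathbb{P}(\phi_1\in L_k)=\mathbb{P}(\phi_2\in L_k)$ for all $\phi_1,\phi_2\in\mathcal{F}(\mathcal{G}_k)$.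
   Context: A rooted converging tree is a weakly connected digraph without cycles in which one node (the root) has out-degree $0$ and every other node has out-degree $1$ (an isolated node is such a tree rooted at itself). A spanning converging forest of a digraph $\mathcal{G}=(V,E)$ is a spanning subgraph (containing all of $V$ and a subset of $E$, identified with its edge set) whose weakly connected components are rooted converging trees. $\mathcal{F}(\mathcal{G})$ denotes the set of all spanning converging forests of $\mathcal{G}$; $r_\phi(i)$ is the root of the tree of $\phi$ containing $i$. "Sampled uniformly" means each forest of $\mathcal{F}(\mathcal{G}_{k-1})$ is equally likely to appear in $L_{k-1}$ (e.g. the entries are independent uniform samples from $\mathcal{F}(\mathcal{G}_{k-1})$). The list $L_k$ is the output of the paper's Insert-Update procedure. *)

theory Defs
  imports "HOL-Probability.Probability"
begin

definition simple_digraph :: "'a set \<Rightarrow> ('a \<times> 'a) set \<Rightarrow> bool" where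
  "simple_digraph V E \<longleftrightarrow> finite V \<and> E \<subseteq> V \<times> V \<and> (\<forall>v. (v, v) \<notin> E)"

definition out_nbrs :: "('a \<times> 'a) set \<Rightarrow> 'a \<Rightarrow> 'a set" where
  "out_nbrs F v = {w. (v, w) \<in> F}"

definition weak_comp :: "'a set \<Rightarrow> ('a \<times> 'a) set \<Rightarrow> 'a \<Rightarrow> 'a set" where
  "weak_comp V F i = {j \<in> V. (i, j) \<in> (F \<union> F\<inverse>)\<^sup>*}"

definition rooted_converging_tree :: "'a set \<Rightarrow> ('a \<times> 'a) set \<Rightarrow> bool" where
  "rooted_converging_tree C T \<longleftrightarrow>
     T \<subseteq> C \<times> C \<and>
     (\<forall>i\<in>C. \<forall>j\<in>C. (i, j) \<in> (T \<union> T\<inverse>)\<^sup>*) \<and>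
     acyclic T \<and>
     (\<exists>r\<in>C. out_nbrs T r = {} \<and>
        (\<forall>v\<in>C - {r}. card (out_nbrs T v) = 1))"

definition spanning_converging_forests :: "'a set \<Rightarrow> ('a \<times> 'a) set \<Rightarrow> ('a \<times> 'a) set set" where
  "spanning_converging_forests V E =
     {\<phi>. \<phi> \<subseteq> E \<and>
        (\<forall>i\<in>V. rooted_converging_tree (weak_comp V \<phi> i)
                   (\<phi> \<inter> (weak_comp V \<phi> i \<times> weak_comp V \<phi> i)))}"

definition forest_root :: "'a set \<Rightarrow> ('a \<times> 'a) set \<Rightarrow> 'a \<Rightarrow> 'a" where
  "forest_root V \<phi> i = (THE r. r \<in> weak_comp V \<phi> i \<and> out_nbrs \<phi> r = {})"

definition insert_update :: "'a set \<Rightarrow> 'a \<times> 'a \<Rightarrow> ('a \<times> 'a) set list \<Rightarrow> ('a \<times> 'a) set list" where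
  "insert_update V e L =
     L @ map (\<lambda>\<phi>. insert e \<phi>)
       (filter (\<lambda>\<phi>. forest_root V \<phi> (fst e) = fst e \<and> forest_root V \<phi> (snd e) \<noteq> fst e) L)"

end

theory Submission
  imports Defs
begin

definition fnl :: "('a \<times> 'a) set \<Rightarrow> bool" where
  "fnl \<phi> \<longleftrightarrow> (\<forall>x y z. (x, y) \<in> \<phi> \<longrightarrow> (x, z) \<in> \<phi> \<longrightarrow> y = z)"

lemma root_exists:
  assumes "finite \<phi>" "acyclic \<phi>"
  shows "\<exists>r. (x, r) \<in> \<phi>\<^sup>* \<and> out_nbrs \<phi> r = {}"
proof -
  have "wf (\<phi>\<inverse>)" using assms finite_acyclic_wf_converse by blast
  then show ?thesis
  proof (induction x rule: wf_induct_rule)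
    case (less x)
    show ?case
    proof (cases "out_nbrs \<phi> x = {}")
      case True then show ?thesis by blast
    next
      case False
      then obtain y where y: "(x, y) \<in> \<phi>" by (auto simp: out_nbrs_def)
      then obtain r where "(y, r) \<in> \<phi>\<^sup>*" "out_nbrs \<phi> r = {}" using less by blast
      then show ?thesis using y converse_rtrancl_into_rtrancl by metis
    qed
  qed
qed

lemma root_unique:
  assumes "fnl \<phi>" "(x, r1) \<in> \<phi>\<^sup>*" "out_nbrs \<phi> r1 = {}" "(x, r2) \<in> \<phi>\<^sup>*" "out_nbrs \<phi> r2 = {}"
  shows "r1 = r2"
  using assms(2,4)
proof (induction x rule: converse_rtrancl_induct)
  case base
  then show ?case using assms(3) by (cases rule: converse_rtranclE) (auto simp: out_nbrs_def)
next
  case (step x y)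
  show ?case
  proof (cases "x = r2")
    case True
    then show ?thesis using step.hyps(1) assms(5) by (auto simp: out_nbrs_def)
  next
    case False
    then obtain y' where y': "(x, y') \<in> \<phi>" "(y', r2) \<in> \<phi>\<^sup>*"
      using step.prems by (meson converse_rtranclE)
    then have "y' = y" using assms(1) step.hyps(1) unfolding fnl_def by blast
    then show ?thesis using y' step.IH by blast
  qed
qed

lemma weak_same_root:
  assumes "finite \<phi>" "acyclic \<phi>" "fnl \<phi>" "(a, b) \<in> (\<phi> \<union> \<phi>\<inverse>)\<^sup>*"
    "(a, ra) \<in> \<phi>\<^sup>*" "out_nbrs \<phi> ra = {}"
    "(b, rb) \<in> \<phi>\<^sup>*" "out_nbrs \<phi> rb = {}"
  shows "ra = rb"
  using assms(4,7,8)
proof (induction b arbitrary: rb rule: rtrancl_induct)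
  case base
  then show ?case using root_unique[OF assms(3) assms(5,6)] by blast
next
  case (step y z)
  obtain ry where ry: "(y, ry) \<in> \<phi>\<^sup>*" "out_nbrs \<phi> ry = {}" using root_exists[OF assms(1,2), of y] by blast
  have "ra = ry" using step.IH[OF ry] .
  moreover have "ry = rb"
  proof (cases "(y, z) \<in> \<phi>")
    case True
    then have "(y, rb) \<in> \<phi>\<^sup>*" using step.prems(1) by (rule converse_rtrancl_into_rtrancl)
    then show ?thesis using root_unique[OF assms(3) ry] step.prems(2) by blast
  next
    case False
    then have "(z, y) \<in> \<phi>" using step.hyps(2) by blast
    then have zr: "(z, ry) \<in> \<phi>\<^sup>*" using ry(1) by (rule converse_rtrancl_into_rtrancl)
    show ?thesis using root_unique[OF assms(3) step.prems(1,2) zr ry(2)] by simp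
  qed
  ultimately show ?case by simp
qed

lemma comp_closed:
  assumes "\<phi> \<subseteq> V \<times> V" "a \<in> weak_comp V \<phi> x" "(a, b) \<in> \<phi> \<union> \<phi>\<inverse>"
  shows "b \<in> weak_comp V \<phi> x"
proof -
  have a: "(x, a) \<in> (\<phi> \<union> \<phi>\<inverse>)\<^sup>*" using assms(2) unfolding weak_comp_def by blast
  have "(x, b) \<in> (\<phi> \<union> \<phi>\<inverse>)\<^sup>*" using rtrancl_into_rtrancl[OF a assms(3)] .
  moreover have "b \<in> V" using assms(1,3) by blast
  ultimately show ?thesis unfolding weak_comp_def by blast
qed

lemma self_comp: "x \<in> V \<Longrightarrow> x \<in> weak_comp V \<phi> x"
  unfolding weak_comp_def by auto

lemma comp_path:
  assumes "\<phi> \<subseteq> V \<times> V" "x \<in> V" "(x, b) \<in> (\<phi> \<union> \<phi>\<inverse>)\<^sup>*"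
  shows "(x, b) \<in> ((\<phi> \<inter> (weak_comp V \<phi> x \<times> weak_comp V \<phi> x)) \<union>
                    (\<phi> \<inter> (weak_comp V \<phi> x \<times> weak_comp V \<phi> x))\<inverse>)\<^sup>* \<and> b \<in> weak_comp V \<phi> x"
  using assms(3)
proof (induction b rule: rtrancl_induct)
  case base
  show ?case using self_comp[OF assms(2)] by simp
next
  case (step y z)
  have yC: "y \<in> weak_comp V \<phi> x" using step.IH by (rule conjunct2)
  have p: "(x, y) \<in> ((\<phi> \<inter> (weak_comp V \<phi> x \<times> weak_comp V \<phi> x)) \<union>
                    (\<phi> \<inter> (weak_comp V \<phi> x \<times> weak_comp V \<phi> x))\<inverse>)\<^sup>*" using step.IH by (rule conjunct1)
  have zC: "z \<in> weak_comp V \<phi> x" using comp_closed[OF assms(1) yC step.hyps(2)] .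
  have e: "(y, z) \<in> (\<phi> \<inter> (weak_comp V \<phi> x \<times> weak_comp V \<phi> x)) \<union>
                    (\<phi> \<inter> (weak_comp V \<phi> x \<times> weak_comp V \<phi> x))\<inverse>"
    using step.hyps(2) yC zC by blast
  show ?case using rtrancl_into_rtrancl[OF p e] zC by (rule conjI)
qed

lemma comp_trancl:
  assumes "\<phi> \<subseteq> V \<times> V" "x \<in> V" "(x, b) \<in> \<phi>\<^sup>+"
  shows "(x, b) \<in> (\<phi> \<inter> (weak_comp V \<phi> x \<times> weak_comp V \<phi> x))\<^sup>+ \<and> b \<in> weak_comp V \<phi> x"
  using assms(3)
proof (induction b rule: trancl_induct)
  case (base y)
  have xC: "x \<in> weak_comp V \<phi> x" using self_comp[OF assms(2)] .
  have "(x, y) \<in> \<phi> \<union> \<phi>\<inverse>" using base by (rule UnI1)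
  then have yC: "y \<in> weak_comp V \<phi> x" using comp_closed[OF assms(1) xC] by blast
  have "(x, y) \<in> \<phi> \<inter> (weak_comp V \<phi> x \<times> weak_comp V \<phi> x)" using base xC yC by blast
  then show ?case using yC r_into_trancl by blast
next
  case (step y z)
  have yC: "y \<in> weak_comp V \<phi> x" using step.IH by (rule conjunct2)
  have p: "(x, y) \<in> (\<phi> \<inter> (weak_comp V \<phi> x \<times> weak_comp V \<phi> x))\<^sup>+" using step.IH by (rule conjunct1)
  have "(y, z) \<in> \<phi> \<union> \<phi>\<inverse>" using step.hyps(2) by (rule UnI1)
  then have zC: "z \<in> weak_comp V \<phi> x" using comp_closed[OF assms(1) yC] by blast
  have e: "(y, z) \<in> \<phi> \<inter> (weak_comp V \<phi> x \<times> weak_comp V \<phi> x)"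
    using step.hyps(2) yC zC by blast
  show ?case using trancl_into_trancl[OF p e] zC by (rule conjI)
qed

lemma rtrancl_in_V:
  assumes "\<phi> \<subseteq> V \<times> V" "(i, r) \<in> \<phi>\<^sup>*" "i \<in> V"
  shows "r \<in> V"
  using assms(2)
proof (induction rule: rtrancl_induct)
  case base show ?case by (rule assms(3))
next
  case (step y z) then show ?case using assms(1) by blast
qed

lemma forest_intro:
  assumes "finite V" "\<phi> \<subseteq> E" "E \<subseteq> V \<times> V" "fnl \<phi>" "acyclic \<phi>"
  shows "\<phi> \<in> spanning_converging_forests V E"
proof -
  have sub: "\<phi> \<subseteq> V \<times> V" using assms(2,3) by (rule subset_trans)
  have fin: "finite \<phi>" using finite_subset[OF sub] assms(1) by blast
  have "rooted_converging_tree (weak_comp V \<phi> i) (\<phi> \<inter> (weak_comp V \<phi> i \<times> weak_comp V \<phi> i))"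
    if i: "i \<in> V" for i
  proof -
  define C where "C = weak_comp V \<phi> i"
  define T where "T = \<phi> \<inter> (C \<times> C)"
  have sy: "sym ((T \<union> T\<inverse>)\<^sup>*)" by (intro sym_rtrancl sym_Un_converse)
  have cp: "(i, j) \<in> (T \<union> T\<inverse>)\<^sup>*" if "j \<in> C" for j
  proof -
    have "(i, j) \<in> (\<phi> \<union> \<phi>\<inverse>)\<^sup>*" using that unfolding C_def weak_comp_def by simp
    from conjunct1[OF comp_path[OF sub i this]] show ?thesis unfolding T_def C_def .
  qed
  have conn: "\<forall>j\<in>C. \<forall>k\<in>C. (j, k) \<in> (T \<union> T\<inverse>)\<^sup>*"
  proof (intro ballI)
    fix j k assume "j \<in> C" "k \<in> C"
    then have ij: "(i, j) \<in> (T \<union> T\<inverse>)\<^sup>*" and ik: "(i, k) \<in> (T \<union> T\<inverse>)\<^sup>*" using cp by auto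
    have ji: "(j, i) \<in> (T \<union> T\<inverse>)\<^sup>*" using symD[OF sy ij] .
    show "(j, k) \<in> (T \<union> T\<inverse>)\<^sup>*" using rtrancl_trans[OF ji ik] .
  qed
  obtain r where r: "(i, r) \<in> \<phi>\<^sup>*" "out_nbrs \<phi> r = {}" using root_exists[OF fin assms(5), of i] by blast
  have rV: "r \<in> V" using rtrancl_in_V[OF sub r(1) i] .
  have "(i, r) \<in> (\<phi> \<union> \<phi>\<inverse>)\<^sup>*" using rtrancl_mono[of \<phi> "\<phi> \<union> \<phi>\<inverse>"] r(1) by blast
  then have rC: "r \<in> C" unfolding C_def weak_comp_def using rV by simp
  have rT: "out_nbrs T r = {}" using r(2) unfolding T_def out_nbrs_def by auto
  have others: "\<forall>w\<in>C - {r}. card (out_nbrs T w) = 1"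
  proof
    fix w assume w: "w \<in> C - {r}"
    have wC: "w \<in> weak_comp V \<phi> i" using w unfolding C_def by simp
    have zC: "z \<in> C" if "(w, z) \<in> \<phi>" for z
    proof -
      have "(w, z) \<in> \<phi> \<union> \<phi>\<inverse>" using that by (rule UnI1)
      from comp_closed[OF sub wC this] show ?thesis unfolding C_def .
    qed
    have eq: "out_nbrs T w = out_nbrs \<phi> w"
      using w zC unfolding T_def out_nbrs_def by auto
    have "out_nbrs \<phi> w \<noteq> {}"
    proof
      assume h: "out_nbrs \<phi> w = {}"
      have p: "(i, w) \<in> (\<phi> \<union> \<phi>\<inverse>)\<^sup>*" using wC unfolding weak_comp_def by simp
      have "r = w" using weak_same_root[OF fin assms(5,4) p r rtrancl_refl h] .
      then show False using w by simp
    qed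
    then obtain a where "a \<in> out_nbrs \<phi> w" by blast
    then have a: "(w, a) \<in> \<phi>" unfolding out_nbrs_def by simp
    have ba: "b = a" if "(w, b) \<in> \<phi>" for b
      using assms(4)[unfolded fnl_def, rule_format, OF that a] .
    have "out_nbrs \<phi> w = {a}"
    proof (rule set_eqI)
      fix b show "b \<in> out_nbrs \<phi> w \<longleftrightarrow> b \<in> {a}"
        unfolding out_nbrs_def using a ba by blast
    qed
    then show "card (out_nbrs T w) = 1" using eq by simp
  qed
  have ac: "acyclic T" using acyclic_subset[OF assms(5)] unfolding T_def by blast
  have ex: "\<exists>r\<in>C. out_nbrs T r = {} \<and> (\<forall>v\<in>C - {r}. card (out_nbrs T v) = 1)"
    using rC rT others by blast
  have "T \<subseteq> C \<times> C" unfolding T_def by blast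
  then have "rooted_converging_tree C T"
    unfolding rooted_converging_tree_def using conn ac ex by simp
  then show ?thesis unfolding C_def T_def .
  qed
  then show ?thesis unfolding spanning_converging_forests_def using assms(2) by simp
qed

lemma forest_comp:
  assumes "\<phi> \<in> spanning_converging_forests V E" "x \<in> V"
  shows "rooted_converging_tree (weak_comp V \<phi> x) (\<phi> \<inter> (weak_comp V \<phi> x \<times> weak_comp V \<phi> x))"
  using assms unfolding spanning_converging_forests_def by blast

lemma forest_fnl:
  assumes "\<phi> \<in> spanning_converging_forests V E" "E \<subseteq> V \<times> V"
  shows "fnl \<phi>"
  unfolding fnl_def
proof (intro allI impI)
  fix x y z assume xy: "(x, y) \<in> \<phi>" and xz: "(x, z) \<in> \<phi>"
  have sub: "\<phi> \<subseteq> V \<times> V" using assms unfolding spanning_converging_forests_def by blast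
  then have x: "x \<in> V" using xy by blast
  define C where "C = weak_comp V \<phi> x"
  define T where "T = \<phi> \<inter> (C \<times> C)"
  have "rooted_converging_tree C T" using forest_comp[OF assms(1) x] unfolding C_def T_def .
  then obtain r where r: "r \<in> C" "out_nbrs T r = {}" "\<forall>v\<in>C - {r}. card (out_nbrs T v) = 1"
    unfolding rooted_converging_tree_def by blast
  have xC: "x \<in> C" using self_comp x C_def by metis
  have "y \<in> C" "z \<in> C" using comp_closed[OF sub] xC xy xz unfolding C_def by blast+
  then have T: "(x, y) \<in> T" "(x, z) \<in> T" using xC xy xz T_def by auto
  show "y = z"
  proof (cases "x = r")
    case True then show ?thesis using r T unfolding out_nbrs_def by auto
  next
    case False
    then have "card (out_nbrs T x) = 1" using r xC by blast
    then obtain a where "out_nbrs T x = {a}" using card_1_singletonE by blast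
    then have "y \<in> {a}" "z \<in> {a}" using T unfolding out_nbrs_def by (metis mem_Collect_eq)+
    then show ?thesis by simp
  qed
qed

lemma forest_acyclic:
  assumes "\<phi> \<in> spanning_converging_forests V E" "E \<subseteq> V \<times> V"
  shows "acyclic \<phi>"
  unfolding acyclic_def
proof (intro allI notI)
  fix x assume xx: "(x, x) \<in> \<phi>\<^sup>+"
  have sub: "\<phi> \<subseteq> V \<times> V" using assms unfolding spanning_converging_forests_def by blast
  then have x: "x \<in> V" using xx tranclD[OF xx] by blast
  define C where "C = weak_comp V \<phi> x"
  define T where "T = \<phi> \<inter> (C \<times> C)"
  have "rooted_converging_tree C T" using forest_comp[OF assms(1) x] unfolding C_def T_def .
  then have "acyclic T" unfolding rooted_converging_tree_def by blast
  moreover have "(x, x) \<in> T\<^sup>+" using comp_trancl[OF sub x xx] unfolding T_def C_def by blast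
  ultimately show False unfolding acyclic_def by blast
qed

lemma forest_root_eq:
  assumes "finite V" "\<phi> \<subseteq> V \<times> V" "fnl \<phi>" "acyclic \<phi>" "i \<in> V"
    "(i, r) \<in> \<phi>\<^sup>*" "out_nbrs \<phi> r = {}"
  shows "forest_root V \<phi> i = r"
  unfolding forest_root_def
proof (rule the_equality)
  have fin: "finite \<phi>" using assms(1,2) finite_subset by blast
  have rV: "r \<in> V" using rtrancl_in_V[OF assms(2,6,5)] .
  have "(i, r) \<in> (\<phi> \<union> \<phi>\<inverse>)\<^sup>*" using assms(6) rtrancl_mono[of \<phi> "\<phi> \<union> \<phi>\<inverse>"] by blast
  then show "r \<in> weak_comp V \<phi> i \<and> out_nbrs \<phi> r = {}"
    unfolding weak_comp_def using rV assms(7) by simp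
  fix r' assume h: "r' \<in> weak_comp V \<phi> i \<and> out_nbrs \<phi> r' = {}"
  then have p: "(i, r') \<in> (\<phi> \<union> \<phi>\<inverse>)\<^sup>*" unfolding weak_comp_def by blast
  have "r = r'" using weak_same_root[OF fin assms(4,3) p assms(6,7) rtrancl_refl] h by blast
  then show "r' = r" by simp
qed

lemma remove_edge:
  assumes "finite V" "E \<subseteq> V \<times> V" "u \<in> V" "v \<in> V"
    "\<phi> \<in> spanning_converging_forests V (insert (u, v) E)" "(u, v) \<in> \<phi>"
  shows "\<phi> - {(u, v)} \<in> spanning_converging_forests V E
     \<and> forest_root V (\<phi> - {(u, v)}) u = u \<and> forest_root V (\<phi> - {(u, v)}) v \<noteq> u"
proof -
  define \<psi> where "\<psi> = \<phi> - {(u, v)}"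
  have E': "insert (u, v) E \<subseteq> V \<times> V" using assms(2,3,4) by blast
  have f: "fnl \<phi>" using forest_fnl[OF assms(5) E'] .
  have a: "acyclic \<phi>" using forest_acyclic[OF assms(5) E'] .
  have sub\<phi>: "\<phi> \<subseteq> insert (u, v) E" using assms(5) unfolding spanning_converging_forests_def by blast
  have psub: "\<psi> \<subseteq> \<phi>" unfolding \<psi>_def by blast
  have subE: "\<psi> \<subseteq> E" using sub\<phi> unfolding \<psi>_def by blast
  have subV: "\<psi> \<subseteq> V \<times> V" using subE assms(2) by blast
  have f\<psi>: "fnl \<psi>" using f psub unfolding fnl_def by blast
  have a\<psi>: "acyclic \<psi>" using acyclic_subset[OF a psub] .
  have fin: "finite \<psi>" using subV assms(1) finite_subset by blast
  have F: "\<psi> \<in> spanning_converging_forests V E" using forest_intro[OF assms(1) subE assms(2) f\<psi> a\<psi>] .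
  have su: "out_nbrs \<psi> u = {}"
  proof -
    have "w = v" if "(u, w) \<in> \<phi>" for w using f assms(6) that unfolding fnl_def by blast
    then show ?thesis unfolding out_nbrs_def \<psi>_def by auto
  qed
  have ru: "forest_root V \<psi> u = u" using forest_root_eq[OF assms(1) subV f\<psi> a\<psi> assms(3) rtrancl_refl su] .
  obtain r where r: "(v, r) \<in> \<psi>\<^sup>*" "out_nbrs \<psi> r = {}" using root_exists[OF fin a\<psi>] by blast
  have rv: "forest_root V \<psi> v = r" using forest_root_eq[OF assms(1) subV f\<psi> a\<psi> assms(4) r] .
  have "r \<noteq> u"
  proof
    assume "r = u"
    then have "(v, u) \<in> \<psi>\<^sup>*" using r(1) by simp
    then have "(v, u) \<in> \<phi>\<^sup>*" using rtrancl_mono[OF psub] by blast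
    then have "(u, u) \<in> \<phi>\<^sup>+" using assms(6) by (meson rtrancl_into_trancl2)
    then show False using a unfolding acyclic_def by blast
  qed
  then show ?thesis using F ru rv unfolding \<psi>_def by simp
qed

theorem theorem5p2:
  fixes V :: "'a set" and E :: "('a \<times> 'a) set" and u v :: 'a
    and l :: nat and D :: "('a \<times> 'a) set list pmf"
  assumes "simple_digraph V E"
    and "u \<in> V" and "v \<in> V" and "u \<noteq> v" and "(u, v) \<notin> E"
    and "\<forall>L\<in>set_pmf D. length L = l \<and> set L \<subseteq> spanning_converging_forests V E"
    and "\<forall>\<phi>1\<in>spanning_converging_forests V E. \<forall>\<phi>2\<in>spanning_converging_forests V E.
           measure_pmf.prob D {L. \<phi>1 \<in> set L} = measure_pmf.prob D {L. \<phi>2 \<in> set L}"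
  shows "\<forall>\<phi>1\<in>spanning_converging_forests V (insert (u, v) E).
         \<forall>\<phi>2\<in>spanning_converging_forests V (insert (u, v) E).
           measure_pmf.prob D {L. \<phi>1 \<in> set (insert_update V (u, v) L)}
         = measure_pmf.prob D {L. \<phi>2 \<in> set (insert_update V (u, v) L)}"
proof -
  have finV: "finite V" and EV: "E \<subseteq> V \<times> V" using assms(1) unfolding simple_digraph_def by auto
  have key: "\<phi> - {(u, v)} \<in> spanning_converging_forests V E \<and>
      measure_pmf.prob D {L. \<phi> \<in> set (insert_update V (u, v) L)}
      = measure_pmf.prob D {L. \<phi> - {(u, v)} \<in> set L}"
    if \<phi>: "\<phi> \<in> spanning_converging_forests V (insert (u, v) E)" for \<phi>
  proof -
    have sub\<phi>: "\<phi> \<subseteq> insert (u, v) E" using \<phi> unfolding spanning_converging_forests_def by blast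
    have F: "\<phi> - {(u, v)} \<in> spanning_converging_forests V E"
    proof (cases "(u, v) \<in> \<phi>")
      case True then show ?thesis using remove_edge[OF finV EV assms(2,3) \<phi>] by blast
    next
      case False
      then have e: "\<phi> - {(u, v)} = \<phi>" by simp
      have "\<phi> \<subseteq> E" using sub\<phi> False by blast
      then have "\<phi> \<in> spanning_converging_forests V E"
        using \<phi> unfolding spanning_converging_forests_def by simp
      then show ?thesis unfolding e .
    qed
    have eq: "(\<phi> \<in> set (insert_update V (u, v) L)) = (\<phi> - {(u, v)} \<in> set L)"
      if L: "L \<in> set_pmf D" for L
    proof -
      have LE: "\<psi> \<subseteq> E" if "\<psi> \<in> set L" for \<psi>
        using assms(6) L that unfolding spanning_converging_forests_def by blast
      have mem: "\<phi> \<in> set (insert_update V (u, v) L) \<longleftrightarrow> \<phi> \<in> set L \<or>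
          (\<exists>\<psi>\<in>set L. (forest_root V \<psi> u = u \<and> forest_root V \<psi> v \<noteq> u) \<and> \<phi> = insert (u, v) \<psi>)"
        unfolding insert_update_def by auto
      show ?thesis
      proof (cases "(u, v) \<in> \<phi>")
        case True
        have c: "forest_root V (\<phi> - {(u, v)}) u = u \<and> forest_root V (\<phi> - {(u, v)}) v \<noteq> u"
          using remove_edge[OF finV EV assms(2,3) \<phi> True] by blast
        have n: "\<phi> \<notin> set L"
        proof
          assume "\<phi> \<in> set L"
          then have "\<phi> \<subseteq> E" by (rule LE)
          then show False using True assms(5) by blast
        qed
        have ins: "insert (u, v) (\<phi> - {(u, v)}) = \<phi>" using True by blast
        have uniq: "\<psi> = \<phi> - {(u, v)}" if "\<psi> \<in> set L" "\<phi> = insert (u, v) \<psi>" for \<psi>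
        proof -
          have "(u, v) \<notin> \<psi>" using LE[OF that(1)] assms(5) by blast
          then show ?thesis using that(2) by blast
        qed
        show ?thesis
        proof
          assume "\<phi> \<in> set (insert_update V (u, v) L)"
          then obtain \<psi> where "\<psi> \<in> set L" "\<phi> = insert (u, v) \<psi>" using mem n by blast
          then show "\<phi> - {(u, v)} \<in> set L" using uniq by simp
        next
          assume h: "\<phi> - {(u, v)} \<in> set L"
          have "\<exists>\<psi>\<in>set L. (forest_root V \<psi> u = u \<and> forest_root V \<psi> v \<noteq> u) \<and> \<phi> = insert (u, v) \<psi>"
            using h c ins by (intro bexI[of _ "\<phi> - {(u, v)}"]) simp_all
          then show "\<phi> \<in> set (insert_update V (u, v) L)" using mem by simp
        qed
      next
        case False
        then have e: "\<phi> - {(u, v)} = \<phi>" by simp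
        have "\<not> (\<phi> = insert (u, v) \<psi>)" for \<psi> using False by blast
        then show ?thesis using mem unfolding e by simp
      qed
    qed
    have seq: "{L. \<phi> \<in> set (insert_update V (u, v) L)} \<inter> set_pmf D = {L. \<phi> - {(u, v)} \<in> set L} \<inter> set_pmf D"
    proof (rule set_eqI)
      fix L show "L \<in> {L. \<phi> \<in> set (insert_update V (u, v) L)} \<inter> set_pmf D \<longleftrightarrow>
                  L \<in> {L. \<phi> - {(u, v)} \<in> set L} \<inter> set_pmf D"
        using eq[of L] by blast
    qed
    have "measure_pmf.prob D {L. \<phi> \<in> set (insert_update V (u, v) L)}
       = measure_pmf.prob D ({L. \<phi> \<in> set (insert_update V (u, v) L)} \<inter> set_pmf D)"
      by (simp only: measure_Int_set_pmf)
    also have "\<dots> = measure_pmf.prob D ({L. \<phi> - {(u, v)} \<in> set L} \<inter> set_pmf D)"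
      by (simp only: seq)
    also have "\<dots> = measure_pmf.prob D {L. \<phi> - {(u, v)} \<in> set L}"
      by (simp only: measure_Int_set_pmf)
    finally show ?thesis using F by simp
  qed
  show ?thesis
  proof (intro ballI)
    fix \<phi>1 \<phi>2 assume h1: "\<phi>1 \<in> spanning_converging_forests V (insert (u, v) E)"
      and h2: "\<phi>2 \<in> spanning_converging_forests V (insert (u, v) E)"
    have k1: "\<phi>1 - {(u, v)} \<in> spanning_converging_forests V E"
      "measure_pmf.prob D {L. \<phi>1 \<in> set (insert_update V (u, v) L)}
      = measure_pmf.prob D {L. \<phi>1 - {(u, v)} \<in> set L}" using key[OF h1] by simp_all
    have k2: "\<phi>2 - {(u, v)} \<in> spanning_converging_forests V E"
      "measure_pmf.prob D {L. \<phi>2 \<in> set (insert_update V (u, v) L)}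
      = measure_pmf.prob D {L. \<phi>2 - {(u, v)} \<in> set L}" using key[OF h2] by simp_all
    have "measure_pmf.prob D {L. \<phi>1 - {(u, v)} \<in> set L} = measure_pmf.prob D {L. \<phi>2 - {(u, v)} \<in> set L}"
      using assms(7) k1(1) k2(1) by blast
    then show "measure_pmf.prob D {L. \<phi>1 \<in> set (insert_update V (u, v) L)}
         = measure_pmf.prob D {L. \<phi>2 \<in> set (insert_update V (u, v) L)}"
      using k1(2) k2(2) by simp
  qed
qed

end
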